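(* $$\sum_{n=1}^\infty \frac{3^n H_n \binom{2n}{n}}{n\, 2^{4n}} = 2\,\mathrm{Li}_2\!\left(\tfrac{1}{3}\right).$$
   Context: $H_n=\sum_{k=1}^n \frac{1}{k}$ denotes the $n$-th harmonic number and $\binom{2n}{n}$ the central binomial coefficient; $\mathrm{Li}_2(x)=\sum_{m=1}^\infty \frac{x^m}{m^2}$ for $|x|\le 1$ is the dilogarithm. *)

theory Defs
  imports "HOL-Analysis.Analysis"
begin

definition Li2 :: "real \<Rightarrow> real" where
  "Li2 x = (\<Sum>m. x ^ Suc m / (real (Suc m))\<^sup>2)"

end

theory Submission
  imports Defs
begin

definition P :: "(nat \<Rightarrow> real) \<Rightarrow> real \<Rightarrow> real" where
  "P c x = (\<Sum>n. c n * x ^ n)"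

definition R :: "(nat \<Rightarrow> real) \<Rightarrow> real \<Rightarrow> bool" where
  "R c K \<longleftrightarrow> (\<forall>x. \<bar>x\<bar> < K \<longrightarrow> summable (\<lambda>n. c n * x ^ n))"

lemma P_deriv:
  assumes "R c K" "\<bar>x\<bar> < K"
  shows "(P c has_field_derivative P (diffs c) x) (at x)"
  unfolding P_def using assms unfolding R_def
  by (intro termdiffs_strong') auto

lemma R_diffs:
  assumes "R c K" shows "R (diffs c) K"
  using assms unfolding R_def
  by (auto intro: termdiff_converges)

lemma x_diffs_sums:
  assumes "R c K" "\<bar>x\<bar> < K"
  shows "(\<lambda>n. real n * c n * x ^ n) sums (x * P (diffs c) x)"
proof -
  have "summable (\<lambda>n. diffs c n * x ^ n)"
    using R_diffs[OF assms(1)] assms(2) unfolding R_def by auto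
  hence "(\<lambda>n. diffs c n * x ^ n * x) sums (P (diffs c) x * x)"
    unfolding P_def by (intro sums_mult2 summable_sums)
  moreover have "(\<lambda>n. (\<lambda>n. real n * c n * x ^ n) (Suc n)) = (\<lambda>n. diffs c n * x ^ n * x)"
    by (auto simp: diffs_def algebra_simps)
  ultimately have "(\<lambda>n. (\<lambda>n. real n * c n * x ^ n) (Suc n)) sums (x * P (diffs c) x)"
    by (simp add: mult.commute)
  hence "(\<lambda>n. real n * c n * x ^ n) sums (x * P (diffs c) x + real 0 * c 0 * x ^ 0)"
    using sums_Suc_iff[of "\<lambda>n. real n * c n * x ^ n" "x * P (diffs c) x"] by simp
  thus ?thesis by simp
qed

lemma R_mult_n:
  assumes "R c K" shows "R (\<lambda>n. real n * c n) K"
  unfolding R_def using sums_summable x_diffs_sums[OF assms] by blast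

lemma R_compare:
  assumes "R c K" "\<And>n. \<bar>d n\<bar> \<le> \<bar>c n\<bar>" shows "R d K"
  unfolding R_def
proof (intro allI impI)
  fix x :: real assume x: "\<bar>x\<bar> < K"
  have "\<bar>x\<bar> < K" using x by simp
  hence "summable (\<lambda>n. c n * \<bar>x\<bar> ^ n)" using assms(1) unfolding R_def by auto
  hence s: "summable (\<lambda>n. norm (c n * \<bar>x\<bar> ^ n))"
    using x assms(1) unfolding R_def
    by (intro powser_insidea[where x="(\<bar>x\<bar>+K)/2"]) auto
  show "summable (\<lambda>n. d n * x ^ n)"
    apply (rule summable_comparison_test[OF _ s])
    using assms(2) by (auto simp: abs_mult power_abs intro!: mult_right_mono)
qed

definition cc :: "nat \<Rightarrow> real" where "cc n = real ((2*n) choose n)"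
definition fc :: "nat \<Rightarrow> real" where "fc n = cc n * harm n"
definition gc :: "nat \<Rightarrow> real" where "gc n = fc n / real n"
definition lc :: "nat \<Rightarrow> real" where "lc n = 1 / (real n)^2"

lemma cc_rec_nat: "Suc n * ((2 * Suc n) choose Suc n) = 2 * (2*n+1) * ((2*n) choose n)"
proof -
  define A where "A = ((2*n+2) choose Suc n)"
  define B where "B = ((2*n+1) choose n)"
  define C where "C = ((2*n) choose n)"
  have 1: "Suc (2*n+1) * B = A * Suc n"
    using Suc_times_binomial_eq[of "2*n+1" n] unfolding A_def B_def by simp
  have 3: "((2*n+1) choose Suc n) = B"
    using binomial_symmetric[of n "2*n+1"] unfolding B_def by simp
  have 2: "Suc (2*n) * C = B * Suc n"
    using Suc_times_binomial_eq[of "2*n" n] 3 unfolding C_def by simp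
  have e: "(2 * Suc n choose Suc n) = A" unfolding A_def by (simp add: algebra_simps)
  have "Suc n * (Suc n * A) = Suc n * (2 * (2*n+1) * C)"
  proof -
    have "Suc n * (Suc n * A) = Suc n * (A * Suc n)" by simp
    also have "\<dots> = Suc n * (Suc (2*n+1) * B)" using 1 by simp
    also have "\<dots> = 2 * (B * Suc n) * Suc n" by simp
    also have "\<dots> = 2 * (Suc (2*n) * C) * Suc n" using 2 by simp
    finally show ?thesis by simp
  qed
  hence "Suc n * A = 2 * (2*n+1) * C" by (simp only: mult_left_cancel)
  thus ?thesis unfolding e C_def .
qed

lemma cc_rec: "real (Suc n) * cc (Suc n) = (4 * real n + 2) * cc n"
proof -
  have "real (Suc n * ((2 * Suc n) choose Suc n)) = real (2 * (2*n+1) * ((2*n) choose n))"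
    using cc_rec_nat by metis
  thus ?thesis unfolding cc_def by (simp add: algebra_simps)
qed

lemma diffs_cc: "diffs cc n = 4 * (real n * cc n) + 2 * cc n"
  unfolding diffs_def using cc_rec[of n] by (simp add: algebra_simps)

lemma diffs_fc: "diffs fc n = 4 * (real n * fc n) + 2 * fc n + cc (Suc n)"
proof -
  have "diffs fc n = real (Suc n) * cc (Suc n) * harm n + cc (Suc n)"
    unfolding diffs_def fc_def by (simp add: harm_Suc field_simps del: of_nat_Suc)
  also have "\<dots> = (4 * real n + 2) * cc n * harm n + cc (Suc n)" by (simp only: cc_rec)
  finally show ?thesis unfolding fc_def by (simp add: algebra_simps)
qed

lemma n_gc: "real n * gc n = fc n"
  unfolding gc_def fc_def by (cases n) (auto simp: harm_def)

lemma harm_le: "harm n \<le> real n"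
proof (induction n)
  case 0 then show ?case by (simp add: harm_def)
next
  case (Suc n)
  have "inverse (real (Suc n)) \<le> 1" by (simp add: inverse_le_1_iff)
  moreover have "harm (Suc n) = (harm n :: real) + inverse (real (Suc n))" by (rule harm_Suc)
  ultimately show ?case using Suc by simp
qed

lemma cc_bound: "cc n \<le> 4 ^ n"
proof -
  have "(2*n) choose n \<le> 2 ^ (2*n)" by (rule binomial_le_pow2)
  hence "real ((2*n) choose n) \<le> real (2 ^ (2*n))" by linarith
  thus ?thesis unfolding cc_def by (simp add: power_mult)
qed

lemma R_cc: "R cc (1/4)"
  unfolding R_def
proof (intro allI impI)
  fix x :: real assume x: "\<bar>x\<bar> < 1/4"
  have "summable (\<lambda>n. (4*\<bar>x\<bar>) ^ n)" using x by (intro summable_geometric) auto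
  thus "summable (\<lambda>n. cc n * x ^ n)"
    apply (rule summable_comparison_test[rotated])
    using cc_bound by (auto simp: cc_def abs_mult power_abs power_mult_distrib intro!: mult_right_mono)
qed

lemma R_fc: "R fc (1/4)"
  apply (rule R_compare[OF R_mult_n[OF R_cc]])
  using harm_le harm_nonneg by (auto simp: fc_def cc_def abs_mult intro!: mult_left_mono)

lemma R_gc: "R gc (1/4)"
  apply (rule R_compare[OF R_cc])
  using harm_le harm_nonneg by (auto simp: gc_def fc_def cc_def abs_mult divide_le_eq)

lemma R_lc: "R lc 1"
  unfolding R_def
proof (intro allI impI)
  fix x :: real assume x: "\<bar>x\<bar> < 1"
  have "summable (\<lambda>n. \<bar>x\<bar> ^ n)" using x by (intro summable_geometric) auto
  thus "summable (\<lambda>n. lc n * x ^ n)"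
  proof (rule summable_comparison_test[rotated])
    show "\<exists>N. \<forall>n\<ge>N. norm (lc n * x ^ n) \<le> \<bar>x\<bar> ^ n"
    proof (intro exI allI impI)
      fix n :: nat
      have "\<bar>lc n\<bar> \<le> 1" unfolding lc_def by (cases n) (auto simp: divide_le_eq)
      thus "norm (lc n * x ^ n) \<le> \<bar>x\<bar> ^ n"
        by (simp add: abs_mult power_abs mult_left_le_one_le)
    qed
  qed
qed


lemma P_sums: "R c K \<Longrightarrow> \<bar>x\<bar> < K \<Longrightarrow> (\<lambda>n. c n * x ^ n) sums P c x"
  unfolding R_def P_def by (auto intro: summable_sums)

lemma comp_deriv:
  assumes "R c K" "\<bar>y - y^2\<bar> < K"
  shows "((\<lambda>y. P c (y - y^2)) has_field_derivative (P (diffs c) (y - y^2) * (1 - 2*y))) (at y)"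
proof -
  have "((\<lambda>y. y - y^2) has_field_derivative (1 - 2*y)) (at y)"
    by (auto intro!: derivative_eq_intros)
  from DERIV_chain2[OF P_deriv[OF assms] this] show ?thesis .
qed

lemma x_range: "0 \<le> y \<Longrightarrow> y \<le> 1/4 \<Longrightarrow> \<bar>y - y^2\<bar> < (1/4::real)"
proof -
  assume a: "0 \<le> y" "y \<le> 1/4"
  have "y^2 \<le> y" using a by (simp add: power2_eq_square mult_left_le_one_le)
  moreover have "(y - 1/2)^2 > 0" using a by simp
  moreover have "y - y^2 = 1/4 - (y - 1/2)^2" by (simp add: power2_eq_square algebra_simps)
  ultimately show ?thesis by auto
qed

lemma S_cc: assumes "\<bar>x\<bar> < 1/4"
  shows "P (diffs cc) x = 4 * (x * P (diffs cc) x) + 2 * P cc x"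
proof -
  have "(\<lambda>n. 4 * (real n * cc n * x ^ n) + 2 * (cc n * x ^ n)) sums (4 * (x * P (diffs cc) x) + 2 * P cc x)"
    by (intro sums_add sums_mult x_diffs_sums[OF R_cc assms] P_sums[OF R_cc assms])
  moreover have "(\<lambda>n. diffs cc n * x ^ n) sums P (diffs cc) x"
    by (rule P_sums[OF R_diffs[OF R_cc] assms])
  ultimately show ?thesis unfolding diffs_cc
    by (metis (no_types, lifting) sums_unique2 ext distrib_right mult.assoc)
qed

lemma stage1:
  assumes "0 \<le> y" "y \<le> 1/4"
  shows "P cc (y - y^2) = 1 / (1 - 2*y)"
proof -
  define C where "C y = (1 - 2*y) * P cc (y - y^2)" for y
  have D: "(C has_field_derivative (P (diffs cc) (y - y^2) * (1 - 2*y) * (1 - 2*y) - 2 * P cc (y - y^2))) (at y)"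
    if "0 \<le> y" "y \<le> 1/4" for y
  proof -
    have "((\<lambda>y. 1 - 2*y) has_field_derivative -2) (at y)" by (auto intro!: derivative_eq_intros)
    from DERIV_mult[OF this comp_deriv[OF R_cc x_range[OF that]]] show ?thesis
      unfolding C_def[abs_def] by simp
  qed
  have "C y = C 0"
  proof (rule DERIV_isconst2[of 0 "1/4"])
    show "continuous_on {0..1/4} C"
      by (intro continuous_at_imp_continuous_on ballI DERIV_isCont[OF D]) auto
    fix t :: real assume t: "0 < t" "t < 1/4"
    have S: "P (diffs cc) (t - t^2) = 4 * ((t - t^2) * P (diffs cc) (t - t^2)) + 2 * P cc (t - t^2)"
      using S_cc x_range t by simp
    have "P (diffs cc) (t - t^2) * (1 - 2*t) * (1 - 2*t) - 2 * P cc (t - t^2) = 0"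
      using S by (simp add: algebra_simps power2_eq_square)
    with D[of t] t show "(C has_field_derivative 0) (at t)" by simp
  qed (use assms in auto)
  moreover have "C 0 = 1" unfolding C_def P_def by (simp add: cc_def)
  moreover have "1 - 2*y > 0" using assms by simp
  ultimately show ?thesis unfolding C_def by (simp add: field_simps)
qed


lemma R_ccs: "R (\<lambda>n. cc (Suc n)) (1/4)"
proof (rule R_compare[OF R_diffs[OF R_cc]])
  fix n
  have "cc (Suc n) \<ge> 0" by (simp add: cc_def)
  thus "\<bar>cc (Suc n)\<bar> \<le> \<bar>diffs cc n\<bar>" unfolding diffs_def
    by (simp add: abs_mult) (simp add: algebra_simps)
qed

lemma x_ccs: assumes "\<bar>x\<bar> < 1/4"
  shows "x * P (\<lambda>n. cc (Suc n)) x = P cc x - 1"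
proof -
  have "(\<lambda>n. cc (Suc n) * x ^ n * x) sums (P (\<lambda>n. cc (Suc n)) x * x)"
    by (intro sums_mult2 P_sums[OF R_ccs assms])
  hence "(\<lambda>n. (\<lambda>n. cc n * x ^ n) (Suc n)) sums (x * P (\<lambda>n. cc (Suc n)) x)"
    by (simp add: algebra_simps)
  hence "(\<lambda>n. cc n * x ^ n) sums (x * P (\<lambda>n. cc (Suc n)) x + cc 0 * x ^ 0)"
    using sums_Suc_iff[of "\<lambda>n. cc n * x ^ n" "x * P (\<lambda>n. cc (Suc n)) x"] by simp
  from sums_unique2[OF this P_sums[OF R_cc assms]] show ?thesis by (simp add: cc_def)
qed

lemma S_fc: assumes "\<bar>x\<bar> < 1/4"
  shows "P (diffs fc) x = 4 * (x * P (diffs fc) x) + 2 * P fc x + P (\<lambda>n. cc (Suc n)) x"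
proof -
  have "(\<lambda>n. 4 * (real n * fc n * x ^ n) + 2 * (fc n * x ^ n) + cc (Suc n) * x ^ n) sums
      (4 * (x * P (diffs fc) x) + 2 * P fc x + P (\<lambda>n. cc (Suc n)) x)"
    by (intro sums_add sums_mult x_diffs_sums[OF R_fc assms] P_sums[OF R_fc assms] P_sums[OF R_ccs assms])
  moreover have "(\<lambda>n. diffs fc n * x ^ n) sums P (diffs fc) x"
    by (rule P_sums[OF R_diffs[OF R_fc] assms])
  moreover have "(\<lambda>n. diffs fc n * x ^ n) = (\<lambda>n. 4 * (real n * fc n * x ^ n) + 2 * (fc n * x ^ n) + cc (Suc n) * x ^ n)"
    unfolding diffs_fc by (simp add: algebra_simps)
  ultimately show ?thesis by (metis sums_unique2)
qed

lemma stage2: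
  assumes "0 \<le> y" "y \<le> 1/4"
  shows "(1 - 2*y) * P fc (y - y^2) = 2 * ln (1 - y) - 2 * ln (1 - 2*y)"
proof -
  define F where "F y = (1 - 2*y) * P fc (y - y^2) - 2 * ln (1 - y) + 2 * ln (1 - 2*y)" for y
  have D: "(F has_field_derivative (P (diffs fc) (y - y^2) * (1 - 2*y) * (1 - 2*y) - 2 * P fc (y - y^2)
           + 2 / (1 - y) - 4 / (1 - 2*y))) (at y)"
    if "0 \<le> y" "y \<le> 1/4" for y
  proof -
    have "((\<lambda>y. 1 - 2*y) has_field_derivative -2) (at y)" by (auto intro!: derivative_eq_intros)
    from DERIV_mult[OF this comp_deriv[OF R_fc x_range[OF that]]]
    have d1: "((\<lambda>y. (1 - 2*y) * P fc (y - y^2)) has_field_derivative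
       (P (diffs fc) (y - y^2) * (1 - 2*y) * (1 - 2*y) - 2 * P fc (y - y^2))) (at y)"
      by simp
    have d2: "((\<lambda>y. 2 * ln (1 - y)) has_field_derivative (-2 / (1 - y))) (at y)"
      using that by (auto intro!: derivative_eq_intros simp: field_simps)
    have d3: "((\<lambda>y. 2 * ln (1 - 2*y)) has_field_derivative (-4 / (1 - 2*y))) (at y)"
      using that by (auto intro!: derivative_eq_intros simp: field_simps)
    from DERIV_add[OF DERIV_diff[OF d1 d2] d3] show ?thesis
      unfolding F_def[abs_def] by (simp add: diff_divide_distrib)
  qed
  have "F y = F 0"
  proof (rule DERIV_isconst2[of 0 "1/4"])
    show "continuous_on {0..1/4} F"
      by (intro continuous_at_imp_continuous_on ballI DERIV_isCont[OF D]) auto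
    fix t :: real assume t: "0 < t" "t < 1/4"
    define x where "x = t - t^2"
    have xr: "\<bar>x\<bar> < 1/4" using x_range t unfolding x_def by simp
    have S: "P (diffs fc) x = 4 * (x * P (diffs fc) x) + 2 * P fc x + P (\<lambda>n. cc (Suc n)) x"
      using S_fc[OF xr] .
    have X: "x * P (\<lambda>n. cc (Suc n)) x = 1 / (1 - 2*t) - 1"
      using x_ccs[OF xr] stage1[of t] t unfolding x_def by simp
    have x0: "x \<noteq> 0" using t unfolding x_def by (simp add: power2_eq_square)
    have t1: "1 - t \<noteq> 0" "1 - 2*t \<noteq> 0" using t by auto
    define a where "a = P (diffs fc) x"
    define b where "b = P fc x"
    define d where "d = P (\<lambda>n. cc (Suc n)) x"
    have S': "a = 4 * (x * a) + 2 * b + d" using S unfolding a_def b_def d_def .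
    have X': "x * d = 1 / (1 - 2*t) - 1" using X unfolding d_def .
    have "x * (a * (1 - 2*t) * (1 - 2*t) - 2 * b + 2 / (1 - t) - 4 / (1 - 2*t)) =
          x * a - 4 * x * (x * a) - 2 * x * b + x * (2 / (1 - t) - 4 / (1 - 2*t))"
      unfolding x_def by (simp add: algebra_simps power2_eq_square)
    also have "\<dots> = x * d + x * (2 / (1 - t) - 4 / (1 - 2*t))"
    proof -
      have "x * a = x * (4 * (x * a) + 2 * b + d)" using S' by simp
      thus ?thesis by algebra
    qed
    also have "\<dots> = 0"
    proof -
      have e1: "2 / (1 - t) = 2 * t / (t - t^2)" using t1 t by (simp add: field_simps power2_eq_square)
      have "x * (2 / (1 - t) - 4 / (1 - 2*t)) = 2 * t - 4 * (t - t^2) / (1 - 2*t)"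
        unfolding x_def e1 using x0 unfolding x_def by (simp add: right_diff_distrib)
      moreover have "1 / (1 - 2*t) - 1 = 2 * t / (1 - 2*t)" using t1 by (simp add: field_simps)
      moreover have "2 * t / (1 - 2*t) + 2 * t - 4 * (t - t^2) / (1 - 2*t) = 0"
        using t1 by (simp add: field_simps power2_eq_square)
      ultimately show ?thesis unfolding X' by simp
    qed
    finally have "a * (1 - 2*t) * (1 - 2*t) - 2 * b + 2 / (1 - t) - 4 / (1 - 2*t) = 0"
      using x0 by simp
    with D[of t] t show "(F has_field_derivative 0) (at t)" unfolding a_def b_def x_def by simp
  qed (use assms in auto)
  moreover have "F 0 = 0" unfolding F_def P_def by (simp add: fc_def harm_def)
  ultimately show ?thesis unfolding F_def by simp
qed


lemma sums_shift: "(f :: nat \<Rightarrow> real) sums s \<Longrightarrow> (\<lambda>n. f (Suc n)) sums (s - f 0)"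
  using sums_Suc_iff[of f "s - f 0"] by simp

lemma x_gc: assumes "\<bar>x\<bar> < 1/4" shows "x * P (diffs gc) x = P fc x"
proof -
  have "(\<lambda>n. real n * gc n * x ^ n) = (\<lambda>n. fc n * x ^ n)" using n_gc by simp
  moreover have "(\<lambda>n. real n * gc n * x ^ n) sums (x * P (diffs gc) x)" by (rule x_diffs_sums[OF R_gc assms])
  ultimately have "(\<lambda>n. fc n * x ^ n) sums (x * P (diffs gc) x)" by simp
  from sums_unique2[OF this P_sums[OF R_fc assms]] show ?thesis .
qed

lemma u_lc: assumes "\<bar>u\<bar> < 1" shows "u * P (diffs lc) u = - ln (1 - u)"
proof -
  have "(\<lambda>n. real n * lc n * u ^ n) sums (u * P (diffs lc) u)"
    by (rule x_diffs_sums[OF R_lc assms])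
  note sums_shift[OF this]
  hence "(\<lambda>n. (\<lambda>n. real n * lc n * u ^ n) (Suc n)) sums (u * P (diffs lc) u - real 0 * lc 0 * u ^ 0)" by simp
  moreover have "(\<lambda>n. (\<lambda>n. real n * lc n * u ^ n) (Suc n)) =
      (\<lambda>n. - ((-1)^n * (1 / real (n + 1)) * ((1 - u) - 1)^(Suc n)))"
  proof
    fix n
    have m1: "(-1::real)^n * (-1)^(Suc n) = -1" by (induct n) auto
    have "(-1::real)^n * (-u)^(Suc n) = ((-1)^n * (-1)^(Suc n)) * u ^ Suc n"
      by (simp only: power_minus[of u] mult.assoc)
    also have "\<dots> = - (u ^ Suc n)" by (simp only: m1 mult_minus1)
    finally have e: "(-1::real)^n * (-u)^(Suc n) = - (u ^ Suc n)" .
    have e2: "(1 - u) - 1 = - u" by simp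
    have "- ((-1)^n * (1 / real (n + 1)) * ((1 - u) - 1)^(Suc n)) = (1 / real (n + 1)) * u ^ Suc n"
      unfolding e2 using e by (simp add: algebra_simps)
    moreover have "(\<lambda>n. real n * lc n * u ^ n) (Suc n) = (1 / real (n + 1)) * u ^ Suc n"
      unfolding lc_def by (simp add: power2_eq_square)
    ultimately show "(\<lambda>n. real n * lc n * u ^ n) (Suc n) = - ((-1)^n * (1 / real (n + 1)) * ((1 - u) - 1)^(Suc n))"
      by linarith
  qed
  ultimately have "(\<lambda>n. (-1)^n * (1 / real (n + 1)) * ((1 - u) - 1)^(Suc n)) sums (- (u * P (diffs lc) u))"
    using sums_minus by fastforce
  moreover have "ln (1 - u) = (\<Sum>n. (-1)^n * (1 / real (n + 1)) * ((1 - u) - 1)^(Suc n))"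
    using assms by (intro ln_series) auto
  ultimately show ?thesis using sums_unique by fastforce
qed

lemma Li2_P: assumes "\<bar>u\<bar> < 1" shows "Li2 u = P lc u"
proof -
  have "(\<lambda>n. lc n * u ^ n) sums P lc u" by (rule P_sums[OF R_lc assms])
  note sums_shift[OF this]
  hence "(\<lambda>n. (\<lambda>n. lc n * u ^ n) (Suc n)) sums (P lc u - lc 0 * u ^ 0)" by simp
  hence "(\<lambda>m. u ^ Suc m / (real (Suc m))\<^sup>2) sums P lc u"
    by (simp add: lc_def field_simps)
  thus ?thesis unfolding Li2_def by (rule sums_unique[symmetric])
qed

lemma stage3: "P gc (3/16) = 2 * Li2 (1/3)"
proof -
  define G where "G y = P gc (y - y^2) - 2 * P lc (y / (1 - y))" for y
  have ur: "\<bar>y / (1 - y)\<bar> < 1" if "0 \<le> y" "y \<le> 1/4" for y :: real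
    using that by (auto simp: field_simps)
  have D: "(G has_field_derivative (P (diffs gc) (y - y^2) * (1 - 2*y)
           - 2 * (P (diffs lc) (y / (1 - y)) * (1 / (1 - y)^2)))) (at y)"
    if "0 \<le> y" "y \<le> 1/4" for y
  proof -
    have du: "((\<lambda>y. y / (1 - y)) has_field_derivative (1 / (1 - y)^2)) (at y)"
      using that by (auto intro!: derivative_eq_intros simp: field_simps power2_eq_square)
    have d2: "((\<lambda>y. P lc (y / (1 - y))) has_field_derivative (P (diffs lc) (y / (1 - y)) * (1 / (1 - y)^2))) (at y)"
      by (rule DERIV_chain2[OF P_deriv[OF R_lc ur[OF that]] du])
    from DERIV_diff[OF comp_deriv[OF R_gc x_range[OF that]] DERIV_cmult[OF d2, of 2]] show ?thesis
      unfolding G_def[abs_def] by simp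
  qed
  have "G (1/4) = G 0"
  proof (rule DERIV_isconst2[of 0 "1/4"])
    show "continuous_on {0..1/4} G"
      by (intro continuous_at_imp_continuous_on ballI DERIV_isCont[OF D]) auto
    fix t :: real assume t: "0 < t" "t < 1/4"
    define x where "x = t - t^2"
    define u where "u = t / (1 - t)"
    have xr: "\<bar>x\<bar> < 1/4" using x_range t unfolding x_def by simp
    have x0: "x \<noteq> 0" using t unfolding x_def by (simp add: power2_eq_square)
    have t1: "1 - t > 0" "1 - 2*t > 0" using t by auto
    have A: "x * P (diffs gc) x = P fc x" by (rule x_gc[OF xr])
    have B: "u * P (diffs lc) u = - ln (1 - u)" unfolding u_def by (rule u_lc[OF ur]) (use t in auto)
    have F: "(1 - 2*t) * P fc x = 2 * ln (1 - t) - 2 * ln (1 - 2*t)"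
      using stage2[of t] t unfolding x_def by simp
    have xu: "x * (1 / (1 - t)^2) = u"
    proof -
      have "x * (1 / (1 - t)^2) = (t * (1 - t)) / ((1 - t) * (1 - t))"
        by (simp add: x_def power2_eq_square algebra_simps)
      also have "\<dots> = u" unfolding u_def using t1 by simp
      finally show ?thesis .
    qed
    have lu: "ln (1 - u) = ln (1 - 2*t) - ln (1 - t)"
    proof -
      have "1 - u = (1 - 2*t) / (1 - t)" unfolding u_def using t1 by (simp add: field_simps)
      thus ?thesis using t1 by (simp add: ln_div)
    qed
    have "x * (P (diffs gc) x * (1 - 2*t) - 2 * (P (diffs lc) u * (1 / (1 - t)^2)))
        = (1 - 2*t) * (x * P (diffs gc) x) - 2 * ((x * (1 / (1 - t)^2)) * P (diffs lc) u)"
      by (simp add: algebra_simps)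
    also have "\<dots> = 0" unfolding A xu B F lu by simp
    finally have "P (diffs gc) x * (1 - 2*t) - 2 * (P (diffs lc) u * (1 / (1 - t)^2)) = 0"
      using x0 by simp
    with D[of t] t show "(G has_field_derivative 0) (at t)" unfolding x_def u_def by simp
  qed auto
  moreover have "G 0 = 0"
  proof -
    have "P c 0 = c 0" for c unfolding P_def by simp
    thus ?thesis unfolding G_def by (simp add: gc_def lc_def)
  qed
  moreover have "G (1/4) = P gc (3/16) - 2 * P lc (1/3)" unfolding G_def by (simp add: power2_eq_square)
  moreover have "Li2 (1/3) = P lc (1/3)" by (rule Li2_P) simp
  ultimately show ?thesis by simp
qed

theorem mainTheorem11:
  shows "(\<lambda>n. 3 ^ (Suc n) * harm (Suc n) * real ((2 * Suc n) choose (Suc n))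
              / (real (Suc n) * 2 ^ (4 * Suc n)))
         sums (2 * Li2 (1/3))"
proof -
  have "(\<lambda>n. gc n * (3/16) ^ n) sums P gc (3/16)" by (rule P_sums[OF R_gc]) simp
  note sums_shift[OF this]
  hence "(\<lambda>n. (\<lambda>n. gc n * (3/16) ^ n) (Suc n)) sums (P gc (3/16) - gc 0 * (3/16) ^ 0)" by simp
  hence "(\<lambda>n. gc (Suc n) * (3/16) ^ Suc n) sums (2 * Li2 (1/3))"
    by (simp add: stage3 gc_def)
  moreover have "(\<lambda>n. gc (Suc n) * (3/16) ^ Suc n) = (\<lambda>n. 3 ^ (Suc n) * harm (Suc n) * real ((2 * Suc n) choose (Suc n))
              / (real (Suc n) * 2 ^ (4 * Suc n)))"
  proof
    fix n
    have "(2::real) ^ (4 * Suc n) = (2 ^ 4) ^ Suc n" by (rule power_mult)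
    hence "(2::real) ^ (4 * Suc n) = 16 ^ Suc n" by simp
    thus "gc (Suc n) * (3/16) ^ Suc n = 3 ^ (Suc n) * harm (Suc n) * real ((2 * Suc n) choose (Suc n))
              / (real (Suc n) * 2 ^ (4 * Suc n))"
      unfolding gc_def fc_def cc_def by (simp only: power_divide) (simp add: field_simps)
  qed
  ultimately show ?thesis by simp
qed

end
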